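(* Let $M$ be a multiway system and let $(f,g)$ be its growth rate, i.e. either $(f,g)=(1,1)$ if $M$ is finite or bounded, or $f,g:\mathbb{R}_{\geq 0}\to\mathbb{R}_{\geq 0}$ are a pair of tight bounds of the growth function $g_M$ if $M$ is unbounded. Then there exists a constant $c\in\mathbb{R}$ such that $f,g\in o(e^{cx})$.
   Context: A (string-based) multiway system is a triple $M=(R,s_{\text{init}},\Sigma)$ where $\Sigma$ is a finite alphabet, $R=\{r_1\to t_1,\dots,r_k\to t_k\}$ is a finite set of string replacement rules with $r_i,t_i\in\Sigma^*$, and $s_{\text{init}}\in\Sigma^*$. Its states graph is the directed graph whose vertices are the strings reachable from $s_{\text{init}}$, with an edge $u\to v$ whenever $v$ arises from $u$ by replacing one occurrence of some $r_i$ in $u$ by $t_i$. The growth function $g_M(n)$ ($n\in\mathbb{N}_+$) is the number of states whose shortest-path distance from $s_{\text{init}}$ in the states graph equals $n-1$ (so $g_M(1)=1$; each generation counts only newly appearing states). $M$ is finite if $g_M(n)=0$ for some $n$; bounded if it is not finite and $g_M$ is bounded; unbounded otherwise. For an unbounded system with growth function $a$, put $\overline{a}_n=\max\{a_k: k\le n\}$ and $\underline{a}_n=\max(\{a_k : k\le n,\ \forall l\ge k: a_l\ge a_k\}\cup\{1\})$. For $h:\mathbb{N}_+\to\mathbb{N}_+$ and infinite $S\subseteq\mathbb{N}_+$, the linear interpolation $L_S(h):\mathbb{R}_{\ge0}\to\mathbb{R}_{\ge0}$ is the polygonal chain starting at $(0,0)$ and passing through the points $(n,h(n))$, $n\in S$,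 in increasing order of $n$. Continuous $f,g:\mathbb{R}_{\ge0}\to\mathbb{R}_{\ge0}$ are tight bounds of $a$ if $f\in\Theta(L_{\mathbb{N}_+}(\overline{a}))$ and $g\in\Theta(L_{\mathbb{N}_+}(\underline{a}))$. Here $\mathcal{O},o,\Omega,\omega,\Theta$ are the usual asymptotic classes as $x\to\infty$. *)

theory Defs
  imports Complex_Main "HOL-Library.Landau_Symbols"
begin

definition mw_system :: "'a set \<Rightarrow> ('a list \<times> 'a list) set \<Rightarrow> 'a list \<Rightarrow> bool" where
  "mw_system Alph R s \<longleftrightarrow> finite Alph \<and> finite R \<and> set s \<subseteq> Alph \<and>
     (\<forall>(r, t) \<in> R. set r \<subseteq> Alph \<and> set t \<subseteq> Alph)"

definition mw_step :: "('a list \<times> 'a list) set \<Rightarrow> 'a list \<Rightarrow> 'a list \<Rightarrow> bool" where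
  "mw_step R u v \<longleftrightarrow> (\<exists>(r, t) \<in> R. \<exists>x y. u = x @ r @ y \<and> v = x @ t @ y)"

definition states_at_dist :: "('a list \<times> 'a list) set \<Rightarrow> 'a list \<Rightarrow> nat \<Rightarrow> 'a list set" where
  "states_at_dist R s n = {u. (mw_step R ^^ n) s u \<and> (\<forall>m<n. \<not> (mw_step R ^^ m) s u)}"

text \<open>Growth function g_M(n) for n \<ge> 1 (the value at 0 is irrelevant).\<close>
definition growth :: "('a list \<times> 'a list) set \<Rightarrow> 'a list \<Rightarrow> nat \<Rightarrow> nat" where
  "growth R s n = card (states_at_dist R s (n - 1))"

definition mw_finite :: "('a list \<times> 'a list) set \<Rightarrow> 'a list \<Rightarrow> bool" where
  "mw_finite R s \<longleftrightarrow> (\<exists>n\<ge>1. growth R s n = 0)"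

definition mw_bounded :: "('a list \<times> 'a list) set \<Rightarrow> 'a list \<Rightarrow> bool" where
  "mw_bounded R s \<longleftrightarrow> \<not> mw_finite R s \<and> (\<exists>B. \<forall>n\<ge>1. growth R s n \<le> B)"

definition mw_unbounded :: "('a list \<times> 'a list) set \<Rightarrow> 'a list \<Rightarrow> bool" where
  "mw_unbounded R s \<longleftrightarrow> \<not> mw_finite R s \<and> \<not> mw_bounded R s"

definition upper_env :: "(nat \<Rightarrow> nat) \<Rightarrow> nat \<Rightarrow> nat" where
  "upper_env a n = Max {a k | k. 1 \<le> k \<and> k \<le> n}"

definition lower_env :: "(nat \<Rightarrow> nat) \<Rightarrow> nat \<Rightarrow> nat" where
  "lower_env a n = Max ({a k | k. 1 \<le> k \<and> k \<le> n \<and> (\<forall>l\<ge>k. a l \<ge> a k)} \<union> {1})"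

text \<open>Linear interpolation L_{N_+}(h): polygonal chain through (0,0) and (n, h n), n \<ge> 1.
  Meaningful for x \<ge> 0.\<close>
definition lin_interp :: "(nat \<Rightarrow> nat) \<Rightarrow> real \<Rightarrow> real" where
  "lin_interp h x = (let n = nat \<lfloor>x\<rfloor>; h0 = (\<lambda>k. if k = 0 then 0 else real (h k))
                     in h0 n + (x - real n) * (h0 (Suc n) - h0 n))"

definition nonneg_cont :: "(real \<Rightarrow> real) \<Rightarrow> bool" where
  "nonneg_cont f \<longleftrightarrow> continuous_on {0..} f \<and> (\<forall>x\<ge>0. f x \<ge> 0)"

definition tight_bounds :: "(nat \<Rightarrow> nat) \<Rightarrow> (real \<Rightarrow> real) \<Rightarrow> (real \<Rightarrow> real) \<Rightarrow> bool" where
  "tight_bounds a f g \<longleftrightarrow> nonneg_cont f \<and> nonneg_cont g \<and>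
     f \<in> \<Theta>(lin_interp (upper_env a)) \<and> g \<in> \<Theta>(lin_interp (lower_env a))"

definition growth_rate :: "('a list \<times> 'a list) set \<Rightarrow> 'a list \<Rightarrow> (real \<Rightarrow> real) \<Rightarrow> (real \<Rightarrow> real) \<Rightarrow> bool" where
  "growth_rate R s f g \<longleftrightarrow>
     ((mw_finite R s \<or> mw_bounded R s) \<and> f = (\<lambda>_. 1) \<and> g = (\<lambda>_. 1)) \<or>
     (mw_unbounded R s \<and> tight_bounds (growth R s) f g)"

end

theory Submission
  imports Defs "HOL-Real_Asymp.Real_Asymp"
begin

lemma reach_bound:
  assumes sys: "mw_system Alph R s"
    and L: "\<forall>(r,t)\<in>R. length t \<le> L"
  shows "(mw_step R ^^ m) s u \<Longrightarrow> set u \<subseteq> Alph \<and> length u \<le> length s + m * L"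
proof (induction m arbitrary: u)
  case 0
  then show ?case using sys by (auto simp: mw_system_def)
next
  case (Suc m)
  from Suc.prems obtain w where w: "(mw_step R ^^ m) s w" and st: "mw_step R w u"
    by (auto elim: relpowp_Suc_E)
  from Suc.IH[OF w] have ih: "set w \<subseteq> Alph" "length w \<le> length s + m * L" by auto
  from st obtain r t x y where rt: "(r,t) \<in> R" and eq: "w = x @ r @ y" "u = x @ t @ y"
    unfolding mw_step_def by blast
  have "set t \<subseteq> Alph" using sys rt by (auto simp: mw_system_def)
  moreover have "length t \<le> L" using L rt by auto
  ultimately show ?case using ih eq by auto
qed

lemma sum_pow_le: "(\<Sum>i\<le>N. (a::nat)^i) \<le> (a+1)^N"
proof (induction N)
  case 0 then show ?case by simp
next
  case (Suc N)
  have "(\<Sum>i\<le>Suc N. a^i) = 1 + a * (\<Sum>i\<le>N. a^i)"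
    by (subst sum.atMost_Suc_shift) (simp add: sum_distrib_left)
  also have "\<dots> \<le> 1 + a * (a+1)^N" using Suc by simp
  also have "\<dots> \<le> (a+1)^Suc N"
  proof -
    have "1 \<le> (a+1)^N" by simp
    then show ?thesis by (simp add: algebra_simps)
  qed
  finally show ?case .
qed

lemma growth_exp_bound:
  assumes sys: "mw_system Alph R s"
  shows "\<exists>C E::real. C \<ge> 1 \<and> E \<ge> 1 \<and> (\<forall>n. real (growth R s n) \<le> C * E ^ n)"
proof -
  have finR: "finite R" and finA: "finite Alph" using sys by (auto simp: mw_system_def)
  define L where "L = Max (insert 0 ((length \<circ> snd) ` R))"
  have L: "\<forall>(r,t)\<in>R. length t \<le> L"
  proof (intro ballI, clarify)
    fix r t assume "(r,t) \<in> R"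
    then have "length t \<in> insert 0 ((length \<circ> snd) ` R)" by force
    then show "length t \<le> L" unfolding L_def using finR by (intro Max_ge) auto
  qed
  define B :: nat where "B = card Alph + 1"
  have B1: "B \<ge> 1" by (simp add: B_def)
  have gb: "growth R s n \<le> B ^ (length s) * (B ^ L) ^ n" for n
  proof -
    let ?N = "length s + (n-1) * L"
    have "states_at_dist R s (n-1) \<subseteq> {xs. set xs \<subseteq> Alph \<and> length xs \<le> ?N}"
      using reach_bound[OF sys L] unfolding states_at_dist_def by blast
    hence "growth R s n \<le> card {xs. set xs \<subseteq> Alph \<and> length xs \<le> ?N}"
      unfolding growth_def by (intro card_mono finite_lists_length_le finA)
    also have "\<dots> = (\<Sum>i\<le>?N. card Alph ^ i)" by (rule card_lists_length_le[OF finA])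
    also have "\<dots> \<le> B ^ ?N" unfolding B_def by (rule sum_pow_le)
    also have "\<dots> \<le> B ^ (length s + n * L)"
      using B1 by (intro power_increasing) auto
    also have "\<dots> = B ^ (length s) * (B ^ L) ^ n"
      by (simp add: power_add power_mult mult.commute)
    finally show ?thesis .
  qed
  show ?thesis
  proof (intro exI conjI allI)
    show "real (B ^ length s) \<ge> 1" using B1 by simp
    show "real (B ^ L) \<ge> 1" using B1 by simp
    fix n
    show "real (growth R s n) \<le> real (B ^ length s) * real (B ^ L) ^ n"
      using gb[of n] by (metis of_nat_le_iff of_nat_mult of_nat_power)
  qed
qed

lemma lin_interp_bound:
  assumes C: "C \<ge> 1" and E: "E \<ge> 1" and h: "\<And>n. n \<ge> 1 \<Longrightarrow> real (h n) \<le> C * E ^ n"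
    and x: "x \<ge> 0"
  shows "0 \<le> lin_interp h x \<and> lin_interp h x \<le> C * E * E powr x"
proof -
  define n where "n = nat \<lfloor>x\<rfloor>"
  define h0 where "h0 = (\<lambda>k. if k = 0 then 0 else real (h k))"
  have nx: "real n \<le> x" "x < real n + 1" using x unfolding n_def by linarith+
  define t where "t = x - real n"
  have t: "0 \<le> t" "t \<le> 1" using nx unfolding t_def by auto
  have li: "lin_interp h x = (1 - t) * h0 n + t * h0 (Suc n)"
    unfolding lin_interp_def Let_def n_def[symmetric] h0_def[symmetric] t_def
    by (simp add: algebra_simps)
  have h0b: "0 \<le> h0 k \<and> h0 k \<le> C * E ^ k" for k
    using h[of k] C unfolding h0_def by auto
  have Ep: "E ^ n \<le> E powr x"
  proof -
    have "E ^ n = E powr real n" using E by (simp add: powr_realpow)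
    also have "\<dots> \<le> E powr x" using E nx by (intro powr_mono) auto
    finally show ?thesis .
  qed
  have b1: "h0 n \<le> C * E * E powr x"
  proof -
    have "h0 n \<le> C * E ^ n" using h0b by blast
    also have "\<dots> \<le> C * E powr x" using Ep C by simp
    also have "\<dots> \<le> C * E * E powr x" using C E by (simp add: mult_right_mono)
    finally show ?thesis .
  qed
  have b2: "h0 (Suc n) \<le> C * E * E powr x"
  proof -
    have "h0 (Suc n) \<le> C * E ^ Suc n" using h0b by blast
    also have "\<dots> = C * E * E ^ n" by simp
    also have "\<dots> \<le> C * E * E powr x" using Ep C E by (intro mult_left_mono) auto
    finally show ?thesis .
  qed
  have "(1 - t) * h0 n + t * h0 (Suc n) \<le> (1 - t) * (C * E * E powr x) + t * (C * E * E powr x)"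
    using t b1 b2 by (intro add_mono mult_left_mono) auto
  moreover have "0 \<le> (1 - t) * h0 n + t * h0 (Suc n)" using t h0b by auto
  ultimately show ?thesis unfolding li by (simp add: algebra_simps)
qed

lemma lin_interp_bigo:
  assumes C: "C \<ge> 1" and E: "E \<ge> 1" and h: "\<And>n. n \<ge> 1 \<Longrightarrow> real (h n) \<le> C * E ^ n"
  shows "lin_interp h \<in> O(\<lambda>x. exp (ln E * x))"
proof (rule bigoI[where c = "C * E"])
  have "eventually (\<lambda>x::real. x \<ge> 0) at_top" by (rule eventually_ge_at_top)
  then show "\<forall>\<^sub>F x in at_top. norm (lin_interp h x) \<le> C * E * norm (exp (ln E * x))"
  proof eventually_elim
    case (elim x)
    from lin_interp_bound[OF C E h elim] show ?case
      using E by (simp add: powr_def mult.commute)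
  qed
qed

lemma exp_small: "(\<lambda>x::real. exp (a * x)) \<in> o(\<lambda>x. exp ((a + 1) * x))"
proof (rule smalloI_tendsto)
  have "((\<lambda>x::real. exp (- x)) \<longlongrightarrow> 0) at_top" by real_asymp
  moreover have "exp (a * x) / exp ((a + 1) * x) = exp (- x)" for x :: real
    by (simp add: exp_diff[symmetric] algebra_simps)
  ultimately show "((\<lambda>x::real. exp (a * x) / exp ((a + 1) * x)) \<longlongrightarrow> 0) at_top" by simp
qed auto

theorem lemma1:
  fixes Alph :: "'a set" and R :: "('a list \<times> 'a list) set" and s :: "'a list"
    and f g :: "real \<Rightarrow> real"
  assumes "mw_system Alph R s"
    and "growth_rate R s f g"
  shows "\<exists>c::real. f \<in> o(\<lambda>x. exp (c * x)) \<and> g \<in> o(\<lambda>x. exp (c * x))"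
proof -
  from assms(2) consider "f = (\<lambda>_. 1)" "g = (\<lambda>_. 1)" | "tight_bounds (growth R s) f g"
    unfolding growth_rate_def by blast
  then show ?thesis
  proof cases
    case 1
    have "(\<lambda>_::real. 1::real) \<in> o(\<lambda>x. exp (1 * x))" by real_asymp
    then show ?thesis using 1 by blast
  next
    case 2
    obtain C E :: real where CE: "C \<ge> 1" "E \<ge> 1" and gb: "\<And>n. real (growth R s n) \<le> C * E ^ n"
      using growth_exp_bound[OF assms(1)] by blast
    let ?a = "growth R s"
    have ub: "real (upper_env ?a n) \<le> C * E ^ n" if "n \<ge> 1" for n
    proof -
      have fin: "finite {?a k | k. 1 \<le> k \<and> k \<le> n}" by simp
      have ne: "{?a k | k. 1 \<le> k \<and> k \<le> n} \<noteq> {}" using that by auto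
      obtain k where k: "1 \<le> k" "k \<le> n" "upper_env ?a n = ?a k"
        using Max_in[OF fin ne] unfolding upper_env_def by auto
      have "real (?a k) \<le> C * E ^ k" by (rule gb)
      also have "\<dots> \<le> C * E ^ n" using CE k by (intro mult_left_mono power_increasing) auto
      finally show ?thesis using k by simp
    qed
    have lb: "real (lower_env ?a n) \<le> C * E ^ n" if "n \<ge> 1" for n
    proof -
      let ?S = "{?a k | k. 1 \<le> k \<and> k \<le> n \<and> (\<forall>l\<ge>k. ?a l \<ge> ?a k)} \<union> {1}"
      have fin: "finite ?S" by simp
      have ne: "?S \<noteq> {}" by auto
      have "lower_env ?a n \<in> ?S" unfolding lower_env_def by (rule Max_in[OF fin ne])
      then consider "lower_env ?a n = 1" | k where "1 \<le> k" "k \<le> n" "lower_env ?a n = ?a k"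
        by auto
      then show ?thesis
      proof cases
        case 1
        have "1 \<le> C * E ^ n" using CE by (simp add: one_le_power order_trans[OF _ mult_right_mono[of 1 C]])
        then show ?thesis using 1 by simp
      next
        case (2 k)
        have "real (?a k) \<le> C * E ^ k" by (rule gb)
        also have "\<dots> \<le> C * E ^ n" using CE 2 by (intro mult_left_mono power_increasing) auto
        finally show ?thesis using 2 by simp
      qed
    qed
    have u: "lin_interp (upper_env ?a) \<in> O(\<lambda>x. exp (ln E * x))"
      by (rule lin_interp_bigo[OF CE ub])
    have l: "lin_interp (lower_env ?a) \<in> O(\<lambda>x. exp (ln E * x))"
      by (rule lin_interp_bigo[OF CE lb])
    from 2 have f: "f \<in> O(lin_interp (upper_env ?a))" and g: "g \<in> O(lin_interp (lower_env ?a))"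
      unfolding tight_bounds_def by (auto intro: bigthetaD1)
    have "f \<in> o(\<lambda>x. exp ((ln E + 1) * x))"
      using landau_o.big_trans[OF f u] exp_small landau_o.big_small_trans by blast
    moreover have "g \<in> o(\<lambda>x. exp ((ln E + 1) * x))"
      using landau_o.big_trans[OF g l] exp_small landau_o.big_small_trans by blast
    ultimately show ?thesis by blast
  qed
qed

end
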